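(* Let $F_2=\langle x,y\rangle$ be the free group of rank $2$, and for $i=1,2,\ldots$ let $$a_i(x,y)=y^{(x y^i)^{2} x^{-1}}\, y^{-x}\in F_2 .$$ Let $\bar F=\langle a_i(x,y)\mid i=1,2,\ldots\rangle\le F_2$. For any subgroup $N$ of $\bar F$, let $\bar N$ be the normal closure of $N$ in $\bar F$ and $\tilde N$ the normal closure of $N$ in $F_2$. Then $\bar F\cap\tilde N=\bar N$.
   Context: Notation: $u^v=v^{-1}uv$ and $u^{-v}=(u^{-1})^v$. *)

theory Defs
  imports "HOL-Algebra.Algebra"
begin

text \<open>The free group of rank 2, realised as reduced words over the letters
  x, y and their inverses; a letter is a pair (generator, inverted?).\<close>

datatype gen = GX | GY

type_synonym letter = "gen \<times> bool"

definition cancels :: "letter \<Rightarrow> letter \<Rightarrow> bool" where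
  "cancels a b \<longleftrightarrow> fst a = fst b \<and> snd a \<noteq> snd b"

fun reduced :: "letter list \<Rightarrow> bool" where
  "reduced [] = True"
| "reduced [a] = True"
| "reduced (a # b # w) = (\<not> cancels a b \<and> reduced (b # w))"

fun push :: "letter \<Rightarrow> letter list \<Rightarrow> letter list" where
  "push a [] = [a]"
| "push a (b # w) = (if cancels a b then w else a # b # w)"

definition reduce :: "letter list \<Rightarrow> letter list" where
  "reduce w = foldr push w []"

definition F2 :: "letter list monoid" where
  "F2 = \<lparr> carrier = {w. reduced w}, monoid.mult = (\<lambda>u v. reduce (u @ v)), one = [] \<rparr>"

definition gx :: "letter list" where "gx = [(GX, False)]"
definition gy :: "letter list" where "gy = [(GY, False)]"

definition conjg :: "('a, 'b) monoid_scheme \<Rightarrow> 'a \<Rightarrow> 'a \<Rightarrow> 'a" where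
  "conjg G u v = inv\<^bsub>G\<^esub> v \<otimes>\<^bsub>G\<^esub> u \<otimes>\<^bsub>G\<^esub> v"

definition a_word :: "nat \<Rightarrow> letter list" where
  "a_word i = conjg F2 gy (((gx \<otimes>\<^bsub>F2\<^esub> (gy [^]\<^bsub>F2\<^esub> i)) [^]\<^bsub>F2\<^esub> (2::nat)) \<otimes>\<^bsub>F2\<^esub> inv\<^bsub>F2\<^esub> gx)
     \<otimes>\<^bsub>F2\<^esub> conjg F2 (inv\<^bsub>F2\<^esub> gy) gx"

definition Fbar :: "letter list set" where
  "Fbar = generate F2 {a_word i | i. i \<ge> 1}"

definition normal_closure :: "('a, 'b) monoid_scheme \<Rightarrow> 'a set \<Rightarrow> 'a set" where
  "normal_closure G S = generate G {conjg G s g | s g. s \<in> S \<and> g \<in> carrier G}"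

end

theory Submission
  imports Defs
begin

definition flipl :: "'a \<times> bool \<Rightarrow> 'a \<times> bool" where "flipl a = (fst a, \<not> snd a)"

lemma cancels_iff: "cancels a b \<longleftrightarrow> b = flipl a"
  by (cases a; cases b) (auto simp: cancels_def flipl_def)

lemma reduced_tl: "reduced (a # w) \<Longrightarrow> reduced w"
  by (cases w) auto

lemma reduced_push: "reduced w \<Longrightarrow> reduced (push a w)"
  by (cases w) (auto dest: reduced_tl)

lemma reduced_reduce: "reduced (reduce w)"
  unfolding reduce_def by (induction w) (auto intro: reduced_push)

lemma reduce_reduced: "reduced w \<Longrightarrow> reduce w = w"
proof (induction w)
  case Nil then show ?case by (simp add: reduce_def)
next
  case (Cons a w)
  then have "reduce w = w" using reduced_tl by blast
  then show ?case using Cons.prems unfolding reduce_def by (cases w) auto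
qed

lemma push_flip: "reduced w \<Longrightarrow> push a (push (flipl a) w) = w"
proof (cases w)
  case Nil then show ?thesis by (simp add: cancels_iff flipl_def)
next
  case (Cons b w')
  assume r: "reduced w"
  show ?thesis
  proof (cases "b = a")
    case True
    have "\<not> cancels a (hd w')" if "w' \<noteq> []" using r Cons True that
      by (cases w') (auto simp: cancels_iff)
    then show ?thesis using Cons True
      by (cases w') (auto simp: cancels_iff flipl_def)
  next
    case False
    then have "b \<noteq> flipl (flipl a)" by (cases a) (simp add: flipl_def)
    then show ?thesis using Cons by (auto simp: cancels_iff flipl_def)
  qed
qed

lemma push_flip': "reduced w \<Longrightarrow> push (flipl a) (push a w) = w"
  using push_flip[of w "flipl a"] by (cases a) (simp add: flipl_def)

lemma foldr_push_push: "reduced r \<Longrightarrow> reduced z \<Longrightarrow> foldr push (push a r) z = push a (foldr push r z)"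
proof (cases r)
  case Nil then show ?thesis by simp
next
  case (Cons b r')
  assume rr: "reduced r" and rz: "reduced z"
  have red: "reduced (foldr push r' z)" using rz by (induction r') (auto intro: reduced_push)
  show ?thesis
  proof (cases "cancels a b")
    case True
    then have "a = flipl b" by (cases a; cases b) (auto simp: cancels_iff flipl_def)
    then show ?thesis using Cons True push_flip'[OF red, of b] by simp
  next
    case False then show ?thesis using Cons by simp
  qed
qed

lemma foldr_push_reduce: "reduced z \<Longrightarrow> foldr push (reduce u) z = foldr push u z"
proof (induction u)
  case Nil then show ?case by (simp add: reduce_def)
next
  case (Cons a u)
  have "foldr push (reduce (a # u)) z = foldr push (push a (reduce u)) z" by (simp add: reduce_def)
  also have "\<dots> = push a (foldr push (reduce u) z)"
    using foldr_push_push[OF reduced_reduce Cons.prems] .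
  finally show ?case using Cons by simp
qed

lemma reduce_append: "reduce (u @ v) = foldr push u (reduce v)"
  by (simp add: reduce_def)

lemma reduce_reduce_left [simp]: "reduce (reduce u @ v) = reduce (u @ v)"
  by (simp add: reduce_append foldr_push_reduce reduced_reduce)

lemma reduce_reduce_right [simp]: "reduce (u @ reduce v) = reduce (u @ v)"
  by (simp add: reduce_append reduce_reduced reduced_reduce)

lemma reduce_reduce [simp]: "reduce (reduce u) = reduce u"
  using reduce_reduce_left[of u "[]"] by simp

definition invw :: "('a \<times> bool) list \<Rightarrow> ('a \<times> bool) list" where
  "invw w = rev (map flipl w)"

lemma invw_invw [simp]: "invw (invw w) = w"
  by (simp add: invw_def rev_map comp_def flipl_def)

lemma invw_append [simp]: "invw (u @ v) = invw v @ invw u"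
  by (simp add: invw_def)

lemma invw_Cons [simp]: "invw (a # u) = invw u @ [flipl a]"
  by (simp add: invw_def)

lemma invw_Nil [simp]: "invw [] = []"
  by (simp add: invw_def)

lemma reduce_invw_left: "reduce (invw w @ w) = []"
proof (induction w)
  case Nil then show ?case by (simp add: reduce_def)
next
  case (Cons a w)
  have "reduce (invw (a # w) @ a # w) = foldr push (invw w) (push (flipl a) (push a (reduce w)))"
    by (simp add: reduce_def)
  also have "\<dots> = foldr push (invw w) (reduce w)" by (simp add: push_flip' reduced_reduce)
  also have "\<dots> = []" using Cons by (simp add: reduce_def)
  finally show ?case .
qed

lemma reduce_invw_right: "reduce (w @ invw w) = []"
  using reduce_invw_left[of "invw w"] by simp

lemma F2_carrier [simp]: "carrier F2 = {w. reduced w}"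
  and F2_mult [simp]: "u \<otimes>\<^bsub>F2\<^esub> v = reduce (u @ v)"
  and F2_one [simp]: "\<one>\<^bsub>F2\<^esub> = []"
  by (simp_all add: F2_def)

lemma group_F2: "group F2"
proof (rule groupI)
  fix x y z :: "letter list"
  show "x \<otimes>\<^bsub>F2\<^esub> y \<in> carrier F2" by (simp add: reduced_reduce)
  show "(x \<otimes>\<^bsub>F2\<^esub> y) \<otimes>\<^bsub>F2\<^esub> z = x \<otimes>\<^bsub>F2\<^esub> (y \<otimes>\<^bsub>F2\<^esub> z)" by simp
  assume "x \<in> carrier F2"
  then show "\<one>\<^bsub>F2\<^esub> \<otimes>\<^bsub>F2\<^esub> x = x" by (simp add: reduce_reduced)
  show "\<exists>y \<in> carrier F2. y \<otimes>\<^bsub>F2\<^esub> x = \<one>\<^bsub>F2\<^esub>"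
    by (rule bexI[of _ "reduce (invw x)"]) (simp_all add: reduced_reduce reduce_invw_left)
next
  show "\<one>\<^bsub>F2\<^esub> \<in> carrier F2" by simp
qed

lemma F2_inv: "inv\<^bsub>F2\<^esub> (reduce w) = reduce (invw w)"
proof -
  interpret group F2 by (rule group_F2)
  show ?thesis
    by (rule inv_equality) (simp_all add: reduced_reduce reduce_invw_left)
qed

lemma F2_inv': "reduced w \<Longrightarrow> inv\<^bsub>F2\<^esub> w = reduce (invw w)"
  using F2_inv[of w] by (simp add: reduce_reduced)

lemma F2_pow: "(reduce w) [^]\<^bsub>F2\<^esub> (n::nat) = reduce (concat (replicate n w))"
proof (induction n)
  case 0 then show ?case by (simp add: reduce_def)
next
  case (Suc n)
  have "concat (replicate n w) @ w = concat (replicate (Suc n) w)"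
    by (induction n) auto
  then show ?case using Suc by simp
qed


lemma a_word_eq:
  "a_word i = reduce (invw (concat (replicate 2 ((GX,False) # replicate i (GY,False))) @ [(GX,True)])
      @ [(GY,False)] @ (concat (replicate 2 ((GX,False) # replicate i (GY,False))) @ [(GX,True)])
      @ [(GX,True),(GY,True),(GX,False)])"
proof -
  have hx: "gx = reduce [(GX,False)]" by (simp add: gx_def reduce_def)
  have hy: "gy = reduce [(GY,False)]" by (simp add: gy_def reduce_def)
  show ?thesis
    unfolding a_word_def conjg_def hx hy
    by (simp add: F2_pow F2_inv flipl_def numeral_2_eq_2)
qed


type_synonym tletter = "nat \<times> bool"

fun pushT :: "tletter \<Rightarrow> tletter list \<Rightarrow> tletter list" where
  "pushT a [] = [a]"
| "pushT a (b # w) = (if b = flipl a then w else a # b # w)"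

fun reducedT :: "tletter list \<Rightarrow> bool" where
  "reducedT [] = True"
| "reducedT [a] = True"
| "reducedT (a # b # w) = (b \<noteq> flipl a \<and> reducedT (b # w))"

lemma reducedT_tl: "reducedT (a # w) \<Longrightarrow> reducedT w"
  by (cases w) auto

lemma flipl_flipl [simp]: "flipl (flipl a) = a"
  by (simp add: flipl_def)

lemma reducedT_push: "reducedT w \<Longrightarrow> reducedT (pushT a w)"
  by (cases w) (auto dest: reducedT_tl simp: flipl_def)

lemma pushT_flip: "reducedT w \<Longrightarrow> pushT a (pushT (flipl a) w) = w"
proof (cases w)
  case Nil then show ?thesis by simp
next
  case (Cons b w')
  assume r: "reducedT w"
  show ?thesis
  proof (cases "b = a")
    case True
    then show ?thesis using Cons r
      by (cases w') auto
  next
    case False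
    then show ?thesis using Cons by auto
  qed
qed

lemma pushT_flip': "reducedT w \<Longrightarrow> pushT (flipl a) (pushT a w) = w"
  using pushT_flip[of w "flipl a"] by simp

type_synonym pt1 = "letter list set \<times> tletter list \<times> int"
type_synonym pt = "pt1 \<times> int"

definition tr :: "letter list \<Rightarrow> letter list set \<Rightarrow> letter list set" where
  "tr f C = (\<lambda>c. reduce (f @ c)) ` C"

lemma tr_tr [simp]: "tr a (tr b C) = tr (reduce (a @ b)) C"
  by (auto simp: tr_def image_image)

lemma tr_Nil: "C \<subseteq> {w. reduced w} \<Longrightarrow> tr [] C = C"
  by (auto simp: tr_def reduce_reduced image_iff subset_iff)

definition sT :: "int \<Rightarrow> tletter list \<Rightarrow> tletter list" where
  "sT c h = (if c = 1 then pushT (1, True) h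
     else if c \<ge> 2 then pushT (nat c - 1, False) (pushT (nat c, True) h) else h)"

definition sT' :: "int \<Rightarrow> tletter list \<Rightarrow> tletter list" where
  "sT' c h = (if c = 1 then pushT (1, False) h
     else if c \<ge> 2 then pushT (nat c, False) (pushT (nat c - 1, True) h) else h)"

lemma reducedT_sT: "reducedT h \<Longrightarrow> reducedT (sT c h)"
  by (simp add: sT_def reducedT_push)

lemma reducedT_sT': "reducedT h \<Longrightarrow> reducedT (sT' c h)"
  by (simp add: sT'_def reducedT_push)

lemma sT'_sT: "reducedT h \<Longrightarrow> sT' c (sT c h) = h"
  using pushT_flip[of _ "(1,False)"] pushT_flip[of _ "(nat c, False)"] pushT_flip[of _ "(nat c - 1, True)"]
  by (auto simp: sT_def sT'_def flipl_def reducedT_push)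

lemma sT_sT': "reducedT h \<Longrightarrow> sT c (sT' c h) = h"
  using pushT_flip[of _ "(1,True)"] pushT_flip[of _ "(nat c, True)"] pushT_flip[of _ "(nat c - 1, False)"]
  by (auto simp: sT_def sT'_def flipl_def reducedT_push)

definition uT :: "tletter list \<times> int \<Rightarrow> tletter list \<times> int" where "uT x = (fst x, snd x + 1)"
definition uT' :: "tletter list \<times> int \<Rightarrow> tletter list \<times> int" where "uT' x = (fst x, snd x - 1)"
definition vT :: "tletter list \<times> int \<Rightarrow> tletter list \<times> int" where "vT x = (sT (snd x) (fst x), snd x - 1)"
definition vT' :: "tletter list \<times> int \<Rightarrow> tletter list \<times> int" where "vT' x = (sT' (snd x + 1) (fst x), snd x + 1)"

definition beta :: "tletter list \<times> int \<Rightarrow> letter list" where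
  "beta x = (if snd x = 0 \<and> fst x \<noteq> [] \<and> snd (last (fst x)) \<and> fst (last (fst x)) \<ge> 1
     then a_word (fst (last (fst x))) else [])"

definition lift :: "(tletter list \<times> int \<Rightarrow> tletter list \<times> int) \<Rightarrow> pt1 \<Rightarrow> pt1" where
  "lift m x = (fst x, m (snd x))"

definition wm :: "pt1 \<Rightarrow> pt1" where "wm x = (tr (beta (snd x)) (fst x), snd x)"
definition wm' :: "pt1 \<Rightarrow> pt1" where "wm' x = (tr (reduce (invw (beta (snd x)))) (fst x), snd x)"

definition fj :: "int \<Rightarrow> pt1 \<Rightarrow> pt1" where
  "fj j = (if j = -1 then lift uT' else if j = 0 then lift uT else if j = 1 then lift vT
     else if j = 2 then wm else id)"
definition gj :: "int \<Rightarrow> pt1 \<Rightarrow> pt1" where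
  "gj j = (if j = -1 then lift uT else if j = 0 then lift uT' else if j = 1 then lift vT'
     else if j = 2 then wm' else id)"

definition Xm :: "pt \<Rightarrow> pt" where "Xm p = (fst p, snd p + 1)"
definition Xm' :: "pt \<Rightarrow> pt" where "Xm' p = (fst p, snd p - 1)"
definition Ym :: "pt \<Rightarrow> pt" where "Ym p = (fj (snd p) (fst p), snd p)"
definition Ym' :: "pt \<Rightarrow> pt" where "Ym' p = (gj (snd p) (fst p), snd p)"

definition Lm :: "letter \<Rightarrow> pt \<Rightarrow> pt" where
  "Lm a = (case a of (GX, b) \<Rightarrow> if b then Xm' else Xm | (GY, b) \<Rightarrow> if b then Ym' else Ym)"

definition theta :: "letter list \<Rightarrow> pt \<Rightarrow> pt" where
  "theta w = foldr (\<lambda>a f. Lm a \<circ> f) w id"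

lemma theta_Nil [simp]: "theta [] = id" and theta_Cons [simp]: "theta (a # w) = Lm a \<circ> theta w"
  by (simp_all add: theta_def)

lemma theta_append [simp]: "theta (u @ v) = theta u \<circ> theta v"
  by (induction u) auto

lemma theta_replicate [simp]: "theta (replicate n a) = Lm a ^^ n"
  by (induction n) auto

definition D1 :: "letter list set \<Rightarrow> pt1 set" where
  "D1 Nb = {x. (\<exists>g \<in> Fbar. fst x = tr g Nb) \<and> reducedT (fst (snd x))}"

definition DS :: "letter list set \<Rightarrow> pt set" where
  "DS Nb = {p. fst p \<in> D1 Nb}"


lemma reduced_a_word: "reduced (a_word i)"
  by (simp add: a_word_eq reduced_reduce)

lemma Fbar_sub: "subgroup Fbar F2"
proof -
  interpret group F2 by (rule group_F2)
  show ?thesis unfolding Fbar_def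
    by (rule generate_is_subgroup) (auto simp: reduced_a_word)
qed

lemma a_word_Fbar: "i \<ge> 1 \<Longrightarrow> a_word i \<in> Fbar"
  unfolding Fbar_def by (rule generate.incl) auto

lemma Fbar_mult: "a \<in> Fbar \<Longrightarrow> b \<in> Fbar \<Longrightarrow> reduce (a @ b) \<in> Fbar"
  using subgroup.m_closed[OF Fbar_sub, of a b] by simp

lemma Fbar_reduced: "a \<in> Fbar \<Longrightarrow> reduced a"
  using subgroup.subset[OF Fbar_sub] by auto

lemma Fbar_inv: "a \<in> Fbar \<Longrightarrow> reduce (invw a) \<in> Fbar"
  using subgroup.m_inv_closed[OF Fbar_sub, of a] F2_inv'[OF Fbar_reduced, of a] by simp

lemma Fbar_one: "[] \<in> Fbar"
  using subgroup.one_closed[OF Fbar_sub] by simp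

lemma beta_Fbar: "beta x \<in> Fbar"
  by (simp add: beta_def a_word_Fbar Fbar_one)

lemma tr_reduced: "tr g C \<subseteq> {w. reduced w}"
  by (auto simp: tr_def reduced_reduce)

lemma D1_tr: "x \<in> D1 Nb \<Longrightarrow> b \<in> Fbar \<Longrightarrow> (tr b (fst x), y) \<in> D1 Nb \<longleftrightarrow> reducedT (fst y)"
  by (auto simp: D1_def intro: Fbar_mult)

lemma D1_red: "x \<in> D1 Nb \<Longrightarrow> fst x \<subseteq> {w. reduced w}"
  using tr_reduced by (fastforce simp: D1_def)

lemma wm_D1: "x \<in> D1 Nb \<Longrightarrow> wm x \<in> D1 Nb"
  unfolding wm_def by (subst D1_tr) (auto simp: beta_Fbar D1_def)

lemma wm'_D1: "x \<in> D1 Nb \<Longrightarrow> wm' x \<in> D1 Nb"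
  unfolding wm'_def by (subst D1_tr) (auto simp: beta_Fbar Fbar_inv D1_def)

lemma wm'_wm: "x \<in> D1 Nb \<Longrightarrow> wm' (wm x) = x"
  using D1_red[of x Nb] by (cases x) (simp add: wm_def wm'_def reduce_invw_left tr_Nil)

lemma wm_wm': "x \<in> D1 Nb \<Longrightarrow> wm (wm' x) = x"
  using D1_red[of x Nb] by (cases x) (simp add: wm_def wm'_def reduce_invw_right tr_Nil)

lemma lift_D1: "x \<in> D1 Nb \<Longrightarrow> (\<And>y. reducedT (fst y) \<Longrightarrow> reducedT (fst (m y))) \<Longrightarrow> lift m x \<in> D1 Nb"
  by (auto simp: lift_def D1_def)

lemma red_uT: "reducedT (fst y) \<Longrightarrow> reducedT (fst (uT y))"
  and red_uT': "reducedT (fst y) \<Longrightarrow> reducedT (fst (uT' y))"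
  and red_vT: "reducedT (fst y) \<Longrightarrow> reducedT (fst (vT y))"
  and red_vT': "reducedT (fst y) \<Longrightarrow> reducedT (fst (vT' y))"
  by (simp_all add: uT_def uT'_def vT_def vT'_def reducedT_sT reducedT_sT')

lemma vT'_vT: "reducedT (fst y) \<Longrightarrow> vT' (vT y) = y"
  by (cases y) (simp add: vT_def vT'_def sT'_sT)

lemma vT_vT': "reducedT (fst y) \<Longrightarrow> vT (vT' y) = y"
  by (cases y) (simp add: vT_def vT'_def sT_sT')

lemma fj_D1: "x \<in> D1 Nb \<Longrightarrow> fj j x \<in> D1 Nb"
  by (auto simp: fj_def wm_D1 intro!: lift_D1 red_uT red_uT' red_vT)

lemma gj_D1: "x \<in> D1 Nb \<Longrightarrow> gj j x \<in> D1 Nb"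
  by (auto simp: gj_def wm'_D1 intro!: lift_D1 red_uT red_uT' red_vT')

lemma D1_reducedT: "x \<in> D1 Nb \<Longrightarrow> reducedT (fst (snd x))"
  by (simp add: D1_def)

lemma gj_fj: "x \<in> D1 Nb \<Longrightarrow> gj j (fj j x) = x"
  using D1_reducedT[of x Nb]
  by (auto simp: gj_def fj_def wm'_wm lift_def uT_def uT'_def vT'_vT)

lemma fj_gj: "x \<in> D1 Nb \<Longrightarrow> fj j (gj j x) = x"
  using D1_reducedT[of x Nb]
  by (auto simp: gj_def fj_def wm_wm' lift_def uT_def uT'_def vT_vT')

lemma Lm_DS: "p \<in> DS Nb \<Longrightarrow> Lm a p \<in> DS Nb"
  by (cases a) (auto simp: Lm_def DS_def Xm_def Xm'_def Ym_def Ym'_def fj_D1 gj_D1 split: gen.splits)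

lemma Lm_inv: "p \<in> DS Nb \<Longrightarrow> Lm (flipl a) (Lm a p) = p"
  by (cases a) (auto simp: Lm_def DS_def Xm_def Xm'_def Ym_def Ym'_def flipl_def gj_fj fj_gj split: gen.splits)

lemma theta_DS: "p \<in> DS Nb \<Longrightarrow> theta w p \<in> DS Nb"
  by (induction w) (auto simp: Lm_DS)

lemma theta_push: "p \<in> DS Nb \<Longrightarrow> theta (push a w) p = Lm a (theta w p)"
proof (cases w)
  case (Cons b w')
  assume p: "p \<in> DS Nb"
  show ?thesis
  proof (cases "cancels a b")
    case True
    then have "a = flipl b" by (cases a; cases b) (auto simp: cancels_iff flipl_def)
    then show ?thesis using Cons True Lm_inv[OF theta_DS[OF p], of b w'] by simp
  qed (use Cons in simp)
qed simp

lemma theta_reduce: "p \<in> DS Nb \<Longrightarrow> theta (reduce w) p = theta w p"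
  by (induction w) (simp_all add: reduce_def theta_push)

lemma theta_mult: "p \<in> DS Nb \<Longrightarrow> theta (reduce (u @ v)) p = theta u (theta v p)"
  by (simp add: theta_reduce)


lemma inv_pow:
  assumes "\<And>x. x \<in> A \<Longrightarrow> f x \<in> A" "\<And>x. x \<in> A \<Longrightarrow> g (f x) = x" "x \<in> A"
  shows "(g ^^ n) ((f ^^ n) x) = x \<and> (f ^^ n) x \<in> A"
  using assms(3)
proof (induction n arbitrary: x)
  case (Suc n)
  have "(g ^^ Suc n) ((f ^^ Suc n) x) = (g ^^ n) (g (f ((f ^^ n) x)))"
    by (simp add: funpow_Suc_right del: funpow.simps) (simp add: funpow_swap1)
  also have "\<dots> = x" using Suc assms by simp
  finally show ?case using Suc assms by simp
qed simp

lemma fj_pow_D1: "x \<in> D1 Nb \<Longrightarrow> (fj k ^^ n) x \<in> D1 Nb"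
  using inv_pow[of "D1 Nb" "fj k" "gj k" x n] fj_D1 gj_fj by blast

lemma gj_fj_pow: "x \<in> D1 Nb \<Longrightarrow> (gj k ^^ n) ((fj k ^^ n) x) = x"
  using inv_pow[of "D1 Nb" "fj k" "gj k" x n] fj_D1 gj_fj by blast

lemma lift_pow: "(lift m ^^ n) x = (fst x, (m ^^ n) (snd x))"
  by (induction n) (auto simp: lift_def)

lemma uT_pow: "(uT ^^ n) y = (fst y, snd y + int n)"
  by (induction n) (auto simp: uT_def)

lemma uT'_pow: "(uT' ^^ n) y = (fst y, snd y - int n)"
  by (induction n) (auto simp: uT'_def)

lemma vT_pow_snd: "snd ((vT ^^ n) y) = snd y - int n"
  by (induction n) (auto simp: vT_def)

lemma vT_pow_red: "reducedT (fst y) \<Longrightarrow> reducedT (fst ((vT ^^ n) y))"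
  by (induction n) (auto simp: red_vT)

lemma vT_pow_k: "k \<ge> 1 \<Longrightarrow> reducedT h \<Longrightarrow> (vT ^^ k) (h, int k) = (pushT (k, True) h, 0)"
proof (induction k arbitrary: h rule: nat_induct_at_least)
  case base then show ?case by (simp add: vT_def sT_def)
next
  case (Suc k)
  have "(vT ^^ Suc k) (h, int (Suc k)) = (vT ^^ k) (vT (h, int (Suc k)))"
    by (simp add: funpow_Suc_right del: funpow.simps)
  also have "vT (h, int (Suc k)) = (pushT (k, False) (pushT (Suc k, True) h), int k)"
  proof -
    have "nat (1 + int k) = Suc k" by simp
    then show ?thesis using Suc.hyps by (simp add: vT_def sT_def)
  qed
  also have "(vT ^^ k) \<dots> = (pushT (k, True) (pushT (k, False) (pushT (Suc k, True) h)), 0)"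
    using Suc by (simp add: reducedT_push)
  also have "pushT (k, True) (pushT (k, False) (pushT (Suc k, True) h)) = pushT (Suc k, True) h"
    using pushT_flip[of "pushT (Suc k, True) h" "(k,True)"] Suc.prems
    by (simp add: reducedT_push flipl_def)
  finally show ?case .
qed

lemma beta_push: "h \<noteq> [] \<Longrightarrow> beta (pushT (i, True) h, 0) = beta (h, 0)"
proof (cases h)
  case (Cons b w)
  assume "h \<noteq> []"
  show ?thesis
  proof (cases "b = flipl (i, True)")
    case True
    then show ?thesis using Cons by (cases w) (auto simp: beta_def flipl_def)
  qed (use Cons in \<open>auto simp: beta_def\<close>)
qed simp

lemma inv_pow_T:
  assumes "reducedT (fst y)"
  shows "(uT' ^^ n) ((vT' ^^ n) ((vT ^^ n) ((uT ^^ n) y))) = y"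
proof -
  have "(vT' ^^ n) ((vT ^^ n) z) = z" if "reducedT (fst z)" for z
    using inv_pow[of "{z. reducedT (fst z)}" vT vT' z n] that red_vT vT'_vT by auto
  then show ?thesis using assms by (simp add: uT_pow uT'_pow)
qed

definition iota :: "letter list \<Rightarrow> pt \<Rightarrow> pt" where
  "iota f p = (if fst (snd (fst p)) = [] \<and> snd (snd (fst p)) = 0 \<and> snd p = 1
     then ((tr f (fst (fst p)), snd (fst p)), snd p) else p)"

lemma core1:
  assumes x: "x \<in> D1 Nb" and i: "i \<ge> 1"
  shows "(gj 0 ^^ i) ((gj 1 ^^ i) (fj 2 ((fj 1 ^^ i) ((fj 0 ^^ i) (gj 2 x)))))
     = (if fst (snd x) = [] \<and> snd (snd x) = 0 then (tr (a_word i) (fst x), snd x) else x)"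
proof -
  obtain C y where xe: "x = (C, y)" by (cases x)
  have ry: "reducedT (fst y)" using x xe by (simp add: D1_def)
  have Cr: "C \<subseteq> {w. reduced w}" using D1_red[OF x] xe by simp
  define T where "T = (vT ^^ i) ((uT ^^ i) y)"
  have "(gj 0 ^^ i) ((gj 1 ^^ i) (fj 2 ((fj 1 ^^ i) ((fj 0 ^^ i) (gj 2 x)))))
     = (tr (reduce (beta T @ invw (beta y))) C, (uT' ^^ i) ((vT' ^^ i) T))"
    by (simp add: xe fj_def gj_def lift_pow wm_def wm'_def T_def)
  also have "(uT' ^^ i) ((vT' ^^ i) T) = y" unfolding T_def by (rule inv_pow_T[OF ry])
  finally have eq: "(gj 0 ^^ i) ((gj 1 ^^ i) (fj 2 ((fj 1 ^^ i) ((fj 0 ^^ i) (gj 2 x)))))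
     = (tr (reduce (beta T @ invw (beta y))) C, y)" .
  have sT: "snd T = snd y" by (simp add: T_def vT_pow_snd uT_pow)
  show ?thesis
  proof (cases "snd y = 0")
    case False
    then have "beta T = []" "beta y = []" using sT by (auto simp: beta_def)
    then show ?thesis using eq False xe Cr by (simp add: tr_Nil reduce_def)
  next
    case True
    obtain h where ye: "y = (h, 0)" using True by (cases y) auto
    have T: "T = (pushT (i, True) h, 0)"
      using vT_pow_k[OF i, of h] ry ye by (simp add: T_def uT_pow)
    show ?thesis
    proof (cases "h = []")
      case False
      then have "beta T = beta y" using T ye beta_push by simp
      then show ?thesis using eq False xe ye Cr by (simp add: reduce_invw_right tr_Nil)
    next
      case True
      then have "beta T = a_word i" "beta y = []" using T ye i by (auto simp: beta_def)
      then show ?thesis using eq True xe ye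
        by (simp add: reduce_reduced reduced_a_word)
    qed
  qed
qed


lemma E_all:
  assumes x: "x \<in> D1 Nb" and i: "i \<ge> 1"
  shows "(gj (j-1) ^^ i) ((gj j ^^ i) (fj (j+1) ((fj j ^^ i) ((fj (j-1) ^^ i) (gj (j+1) x)))))
     = (if fst (snd x) = [] \<and> snd (snd x) = 0 \<and> j = 1 then (tr (a_word i) (fst x), snd x) else x)"
proof -
  have f3: "fj 3 = id" "gj 3 = id" "fj 4 = id" "gj 4 = id" "fj (-2) = id" "gj (-2) = id"
    "fj (-3) = id" "gj (-3) = id" by (simp_all add: fj_def gj_def)
  consider "j = 1" | "j = 2" | "j = 3" | "j = -2" | "j = -1" | "j = 0"
    | "j \<notin> {-2, -1, 0, 1, 2, 3}" by auto
  then show ?thesis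
  proof cases
    case 1 then show ?thesis using core1[OF x i] by simp
  next
    case 2
    then show ?thesis using f3 x gj_fj_pow[OF fj_pow_D1[OF x, where k=1 and n=i], where k=2 and n=i] gj_fj_pow[OF x, where k=1 and n=i] by simp
  next
    case 3
    then show ?thesis using f3 x by (simp add: gj_fj_pow fj_pow_D1)
  next
    case 4
    then show ?thesis using f3 x by (simp add: fj_gj)
  next
    case 5
    then show ?thesis by (simp add: f3 fj_def gj_def lift_pow uT_pow uT'_pow lift_def uT_def uT'_def)
  next
    case 6
    obtain C h c where xe: "x = (C, h, c)" by (cases x) auto
    have rh: "reducedT h" using x xe by (simp add: D1_def)
    show ?thesis using 6 xe rh
      by (simp add: fj_def gj_def lift_pow uT_pow uT'_pow lift_def vT_def vT'_def sT_sT')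
  next
    case 7
    then have "fj (j-1) = id" "fj j = id" "fj (j+1) = id" "gj (j-1) = id" "gj j = id" "gj (j+1) = id"
      by (auto simp: fj_def gj_def)
    then show ?thesis using 7 by simp
  qed
qed

lemma Ym_pow: "(Ym ^^ n) p = ((fj (snd p) ^^ n) (fst p), snd p)"
  by (induction n) (auto simp: Ym_def)

lemma Ym'_pow: "(Ym' ^^ n) p = ((gj (snd p) ^^ n) (fst p), snd p)"
  by (induction n) (auto simp: Ym'_def)

lemma invw_replicate [simp]: "invw (replicate n a) = replicate n (flipl a)"
  by (simp add: invw_def)

lemma theta_a_word:
  assumes p: "p \<in> DS Nb" and i: "i \<ge> 1"
  shows "theta (a_word i) p = iota (a_word i) p"
proof -
  obtain x j where pe: "p = (x, j)" by (cases p)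
  have x: "x \<in> D1 Nb" using p pe by (simp add: DS_def)
  have "theta (a_word i) p = theta (invw (concat (replicate 2 ((GX,False) # replicate i (GY,False))) @ [(GX,True)])
      @ [(GY,False)] @ (concat (replicate 2 ((GX,False) # replicate i (GY,False))) @ [(GX,True)])
      @ [(GX,True),(GY,True),(GX,False)]) p"
    unfolding a_word_eq by (rule theta_reduce[OF p])
  also have "\<dots> = ((gj (j-1) ^^ i) ((gj j ^^ i) (fj (j+1) ((fj j ^^ i) ((fj (j-1) ^^ i) (gj (j+1) x))))), j)"
    by (simp add: pe numeral_2_eq_2 flipl_def Lm_def Xm_def Xm'_def Ym_def Ym'_def Ym_pow Ym'_pow)
  also have "\<dots> = iota (a_word i) p"
    using E_all[OF x i, of j] pe by (simp add: iota_def)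
  finally show ?thesis .
qed


lemma iota_DS: "p \<in> DS Nb \<Longrightarrow> f \<in> Fbar \<Longrightarrow> iota f p \<in> DS Nb"
  by (auto simp: iota_def DS_def D1_def intro: Fbar_mult)

lemma iota_comp: "iota a (iota b p) = iota (reduce (a @ b)) p"
  by (simp add: iota_def)

lemma iota_Nil: "p \<in> DS Nb \<Longrightarrow> iota [] p = p"
  using D1_red[of "fst p" Nb] by (cases p) (auto simp: iota_def DS_def tr_Nil)

lemma theta_Fbar:
  assumes f: "f \<in> Fbar" and p: "p \<in> DS Nb"
  shows "theta f p = iota f p"
  using f p unfolding Fbar_def
proof (induction f arbitrary: p rule: generate.induct)
  case one then show ?case by (simp add: iota_Nil)
next
  case (incl h p)
  then obtain i where "h = a_word i" "i \<ge> 1" by auto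
  then show ?case using theta_a_word[OF incl.prems] by simp
next
  case (inv h p)
  then obtain i where hi: "h = a_word i" "i \<ge> 1" by auto
  have hF: "h \<in> Fbar" using hi a_word_Fbar by simp
  have ih: "inv\<^bsub>F2\<^esub> h = reduce (invw h)" using F2_inv'[OF reduced_a_word] hi by simp
  define q where "q = iota (reduce (invw h)) p"
  have q: "q \<in> DS Nb" unfolding q_def by (rule iota_DS[OF inv.prems Fbar_inv[OF hF]])
  have "theta h q = iota h q" using theta_a_word[OF q hi(2)] hi by simp
  also have "\<dots> = p" unfolding q_def iota_comp by (simp add: reduce_invw_right iota_Nil[OF inv.prems])
  finally have thq: "theta h q = p" .
  have "theta (reduce (invw h)) p = theta (reduce (invw h)) (theta h q)" using thq by simp
  also have "\<dots> = theta (reduce (invw h @ h)) q" using theta_mult[OF q, of "reduce (invw h)" h] by simp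
  also have "\<dots> = q" by (simp add: reduce_invw_left)
  finally show ?case using ih q_def by simp
next
  case (eng h1 h2 p)
  have h2F: "h2 \<in> Fbar" using eng.hyps(2) unfolding Fbar_def .
  have "theta (h1 \<otimes>\<^bsub>F2\<^esub> h2) p = theta h1 (theta h2 p)" using theta_mult[OF eng.prems] by simp
  also have "\<dots> = iota h1 (iota h2 p)" using eng.IH eng.prems iota_DS[OF eng.prems h2F] by simp
  finally show ?case by (simp add: iota_comp)
qed

lemma theta_inv_cancel: "p \<in> DS Nb \<Longrightarrow> theta (reduce (invw g)) (theta g p) = p"
  using theta_mult[of p Nb "reduce (invw g)" g] by (simp add: reduce_invw_left)

theorem lemma3p1:
  assumes "subgroup N (F2\<lparr>carrier := Fbar\<rparr>)"
  shows "Fbar \<inter> normal_closure F2 N = normal_closure (F2\<lparr>carrier := Fbar\<rparr>) N"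
proof -
  interpret F: group F2 by (rule group_F2)
  define Fb where "Fb = F2\<lparr>carrier := Fbar\<rparr>"
  have gFb: "group Fb" unfolding Fb_def by (rule subgroup.subgroup_is_group[OF Fbar_sub group_F2])
  interpret B: group Fb by (rule gFb)
  have NF: "N \<subseteq> Fbar" using subgroup.subset[OF assms] by simp
  have invFb: "inv\<^bsub>Fb\<^esub> g = inv\<^bsub>F2\<^esub> g" if "g \<in> Fbar" for g
    unfolding Fb_def using F.m_inv_consistent[OF Fbar_sub that] .
  have conjFb: "conjg Fb s g = conjg F2 s g" if "g \<in> Fbar" for s g
    using invFb[OF that] by (simp add: conjg_def Fb_def)
  define Nb where "Nb = normal_closure Fb N"
  define Gs where "Gs = {conjg Fb s g | s g. s \<in> N \<and> g \<in> carrier Fb}"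
  have NbGs: "Nb = generate Fb Gs" by (simp add: Nb_def Gs_def normal_closure_def)
  have cFb: "carrier Fb = Fbar" by (simp add: Fb_def)
  have GsF: "Gs \<subseteq> carrier Fb"
  proof
    fix z assume "z \<in> Gs"
    then obtain s g where "z = inv\<^bsub>Fb\<^esub> g \<otimes>\<^bsub>Fb\<^esub> s \<otimes>\<^bsub>Fb\<^esub> g" "s \<in> carrier Fb" "g \<in> carrier Fb"
      using NF cFb unfolding Gs_def conjg_def by auto
    then show "z \<in> carrier Fb" by simp
  qed
  have sNbB: "subgroup Nb Fb" unfolding NbGs by (rule B.generate_is_subgroup[OF GsF])
  have sNb: "subgroup Nb F2" using F.incl_subgroup[OF Fbar_sub] sNbB by (simp add: Fb_def)
  have NbF: "Nb \<subseteq> Fbar" using subgroup.subset[OF sNbB] by (simp add: Fb_def)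
  have Nb_red: "Nb \<subseteq> {w. reduced w}" using NbF Fbar_reduced by auto
  have conj_in: "reduce (invw g @ n @ g) \<in> Nb" if "n \<in> N" "g \<in> Fbar" for n g
  proof -
    have "conjg Fb n g \<in> Gs" using that by (auto simp: Gs_def Fb_def)
    then have "conjg F2 n g \<in> Nb" unfolding NbGs using conjFb[OF that(2)] generate.incl by metis
    then show ?thesis using F2_inv'[OF Fbar_reduced[OF that(2)]] by (simp add: conjg_def)
  qed
  have trNb: "tr k Nb = Nb" if "k \<in> Nb" for k
  proof
    show "tr k Nb \<subseteq> Nb" using subgroup.m_closed[OF sNb that] by (auto simp: tr_def)
    show "Nb \<subseteq> tr k Nb"
    proof
      fix m assume m: "m \<in> Nb"
      have kr: "reduced k" using that Nb_red by auto
      have "inv\<^bsub>F2\<^esub> k \<otimes>\<^bsub>F2\<^esub> m \<in> Nb"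
        using subgroup.m_closed[OF sNb subgroup.m_inv_closed[OF sNb that] m] .
      then have i1: "reduce (invw k @ m) \<in> Nb" using F2_inv'[OF kr] by simp
      have "reduce (k @ reduce (invw k @ m)) = m"
      proof -
        have "reduce (k @ reduce (invw k @ m)) = reduce (reduce (k @ invw k) @ m)"
          by (metis append.assoc reduce_reduce_left reduce_reduce_right)
        also have "\<dots> = m" using m Nb_red by (simp add: reduce_invw_right reduce_reduced subset_iff)
        finally show ?thesis .
      qed
      then show "m \<in> tr k Nb" using i1 unfolding tr_def by (metis image_eqI)
    qed
  qed
  have thetaN: "theta n q = q" if nN: "n \<in> N" and qD: "q \<in> DS Nb" for n q
  proof -
    obtain C h c j where qe: "q = ((C, h, c), j)" by (cases q) auto
    obtain g where g: "g \<in> Fbar" "C = tr g Nb" using qD qe by (auto simp: DS_def D1_def)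
    have "tr n C = tr (reduce (n @ g)) Nb" using g by simp
    also have "reduce (n @ g) = reduce (g @ reduce (invw g @ n @ g))"
    proof -
      have "reduce (g @ reduce (invw g @ n @ g)) = reduce (reduce (g @ invw g) @ n @ g)"
        by (metis append.assoc reduce_reduce_left reduce_reduce_right)
      then show ?thesis by (simp add: reduce_invw_right)
    qed
    also have "tr \<dots> Nb = tr g (tr (reduce (invw g @ n @ g)) Nb)" by simp
    also have "\<dots> = C" using trNb[OF conj_in[OF nN g(1)]] g by simp
    finally have "tr n C = C" .
    moreover have "theta n q = iota n q" using theta_Fbar[OF _ qD] NF nN by auto
    ultimately show ?thesis by (simp add: iota_def qe)
  qed
  have thetaC: "theta (conjg F2 n g) q = q" if nN: "n \<in> N" and gF: "g \<in> carrier F2" and qD: "q \<in> DS Nb" for n g q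
  proof -
    have ze: "conjg F2 n g = reduce (invw g @ n @ g)"
      using gF F2_inv'[of g] by (simp add: conjg_def)
    have "theta (conjg F2 n g) q = theta (invw g) (theta n (theta g q))"
      unfolding ze theta_reduce[OF qD] by simp
    also have "\<dots> = theta (invw g) (theta g q)" using thetaN[OF nN theta_DS[OF qD]] by simp
    also have "\<dots> = theta (invw g @ g) q" by simp
    also have "\<dots> = q" using theta_reduce[OF qD, of "invw g @ g"] by (simp add: reduce_invw_left)
    finally show ?thesis .
  qed
  have thetaT: "theta z p = p" if "z \<in> normal_closure F2 N" "p \<in> DS Nb" for z p
    using that unfolding normal_closure_def
  proof (induction z arbitrary: p rule: generate.induct)
    case one then show ?case by simp
  next
    case (incl z)
    then obtain n g where ng: "z = conjg F2 n g" "n \<in> N" "g \<in> carrier F2" by auto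
    then show ?case using thetaC[OF ng(2,3) incl.prems] by simp
  next
    case (inv z)
    then obtain n g where ng: "z = conjg F2 n g" "n \<in> N" "g \<in> carrier F2" by auto
    have zr: "reduced z" using ng by (simp add: conjg_def reduced_reduce)
    have "theta (reduce (invw z)) p = theta (reduce (invw z)) (theta z p)"
      using thetaC[OF ng(2,3) inv.prems] ng(1) by simp
    also have "\<dots> = p" by (rule theta_inv_cancel[OF inv.prems])
    finally show ?case using F2_inv'[OF zr] by simp
  next
    case (eng h1 h2)
    then show ?case using theta_mult[OF eng.prems] theta_DS[OF eng.prems] by simp
  qed
  show ?thesis
  proof
    show "Fbar \<inter> normal_closure F2 N \<subseteq> normal_closure (F2\<lparr>carrier := Fbar\<rparr>) N"
    proof
      fix z assume z: "z \<in> Fbar \<inter> normal_closure F2 N"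
      define p0 :: pt where "p0 = ((Nb, [], 0), 1)"
      have "Nb = tr [] Nb" using tr_Nil[OF Nb_red] by simp
      then have p0: "p0 \<in> DS Nb" using Fbar_one by (auto simp: p0_def DS_def D1_def)
      have "theta z p0 = p0" using thetaT z p0 by auto
      moreover have "theta z p0 = iota z p0" using theta_Fbar z p0 by auto
      ultimately have "tr z Nb = Nb" by (simp add: iota_def p0_def)
      moreover have "[] \<in> Nb" using subgroup.one_closed[OF sNb] by simp
      ultimately have "reduce (z @ []) \<in> Nb" unfolding tr_def by blast
      then show "z \<in> normal_closure (F2\<lparr>carrier := Fbar\<rparr>) N"
        using z Fbar_reduced reduce_reduced Nb_def Fb_def by auto
    qed
    show "normal_closure (F2\<lparr>carrier := Fbar\<rparr>) N \<subseteq> Fbar \<inter> normal_closure F2 N"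
    proof
      fix z assume "z \<in> normal_closure (F2\<lparr>carrier := Fbar\<rparr>) N"
      then have z: "z \<in> generate Fb Gs" using NbGs Nb_def Fb_def by simp
      then have "z \<in> Fbar" using NbF NbGs by auto
      moreover have "z \<in> normal_closure F2 N" using z
      proof (induction z rule: generate.induct)
        case one then show ?case by (simp add: normal_closure_def Fb_def generate.one[of F2, simplified])
      next
        case (incl h)
        then obtain s g where "h = conjg Fb s g" "s \<in> N" "g \<in> Fbar" by (auto simp: Gs_def Fb_def)
        then have "h = conjg F2 s g" "s \<in> N" "g \<in> carrier F2" using conjFb Fbar_reduced by auto
        then show ?case unfolding normal_closure_def
          by (intro generate.incl) blast
      next
        case (inv h)
        then obtain s g where sg: "h = conjg Fb s g" "s \<in> N" "g \<in> Fbar" by (auto simp: Gs_def Fb_def)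
        have "h \<in> Fbar" using inv GsF by (auto simp: Fb_def)
        then have "inv\<^bsub>Fb\<^esub> h = inv\<^bsub>F2\<^esub> h" by (rule invFb)
        moreover have "h = conjg F2 s g" "s \<in> N" "g \<in> carrier F2" using sg conjFb Fbar_reduced by auto
        ultimately show ?case unfolding normal_closure_def
          by (metis (mono_tags, lifting) generate.inv mem_Collect_eq)
      next
        case (eng h1 h2)
        then show ?case unfolding normal_closure_def using generate.eng[of h1 F2 _ h2]
          by (simp add: Fb_def)
      qed
      ultimately show "z \<in> Fbar \<inter> normal_closure F2 N" by simp
    qed
  qed
qed

end
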